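(* Let $\Gamma=(V,E)$ be a graph. If for each $v\in V$ the monoid $M_v$ is embeddable in a group $G_v$, then the graph product $\Gamma_{v\in V}M_v$ is embeddable in the group $\Gamma_{v\in V}G_v$.
   Context: A graph $\Gamma=(V,E)$ has vertex set $V$ and irreflexive symmetric edge relation $E$. The graph product $\Gamma_{v\in V}M_v$ of pairwise disjoint monoids $M_v$ is the quotient of their free product by the congruence generated by all pairs $(mn,nm)$ with $m\in M_u$, $n\in M_v$, $(u,v)\in E$ (for groups this is the usual graph product of groups). *)

theory Defs
  imports "HOL-Algebra.Group"
begin

definition monoid_embedding :: "('a, 'c) monoid_scheme \<Rightarrow> ('b, 'd) monoid_scheme \<Rightarrow> ('a \<Rightarrow> 'b) \<Rightarrow> bool" where
  "monoid_embedding M N f \<longleftrightarrow> f \<in> mon M N \<and> f \<one>\<^bsub>M\<^esub> = \<one>\<^bsub>N\<^esub>"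

definition embeddable :: "('a, 'c) monoid_scheme \<Rightarrow> ('b, 'd) monoid_scheme \<Rightarrow> bool" where
  "embeddable M N \<longleftrightarrow> (\<exists>f. monoid_embedding M N f)"

definition gp_words :: "('v \<Rightarrow> ('a, 'c) monoid_scheme) \<Rightarrow> ('v \<times> 'a) list set" where
  "gp_words M = {w. \<forall>(v, m) \<in> set w. m \<in> carrier (M v)}"

inductive gp_eq :: "('v \<Rightarrow> 'v \<Rightarrow> bool) \<Rightarrow> ('v \<Rightarrow> ('a, 'c) monoid_scheme)
    \<Rightarrow> ('v \<times> 'a) list \<Rightarrow> ('v \<times> 'a) list \<Rightarrow> bool"
  for E M where
  gp_refl: "gp_eq E M w w"
| gp_sym: "gp_eq E M w w' \<Longrightarrow> gp_eq E M w' w"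
| gp_trans: "gp_eq E M w w' \<Longrightarrow> gp_eq E M w' w'' \<Longrightarrow> gp_eq E M w w''"
| gp_ctxt: "gp_eq E M w w' \<Longrightarrow> gp_eq E M (a @ w @ b) (a @ w' @ b)"
| gp_unit: "gp_eq E M [(v, \<one>\<^bsub>M v\<^esub>)] []"
| gp_mult: "m \<in> carrier (M v) \<Longrightarrow> n \<in> carrier (M v) \<Longrightarrow>
      gp_eq E M [(v, m), (v, n)] [(v, m \<otimes>\<^bsub>M v\<^esub> n)]"
| gp_comm: "E u v \<Longrightarrow> m \<in> carrier (M u) \<Longrightarrow> n \<in> carrier (M v) \<Longrightarrow>
      gp_eq E M [(u, m), (v, n)] [(v, n), (u, m)]"

definition gp_class :: "('v \<Rightarrow> 'v \<Rightarrow> bool) \<Rightarrow> ('v \<Rightarrow> ('a, 'c) monoid_scheme)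
    \<Rightarrow> ('v \<times> 'a) list \<Rightarrow> ('v \<times> 'a) list set" where
  "gp_class E M w = {w'. gp_eq E M w w'}"

definition graph_product :: "('v \<Rightarrow> 'v \<Rightarrow> bool) \<Rightarrow> ('v \<Rightarrow> ('a, 'c) monoid_scheme)
    \<Rightarrow> ('v \<times> 'a) list set monoid" where
  "graph_product E M =
    \<lparr>carrier = gp_class E M ` gp_words M,
     mult = (\<lambda>X Y. gp_class E M ((SOME x. x \<in> X \<inter> gp_words M) @ (SOME y. y \<in> Y \<inter> gp_words M))),
     one = gp_class E M []\<rparr>"

end

theory Submission
  imports Defs
begin


definition prj :: "'v \<Rightarrow> 'v \<Rightarrow> ('v \<times> 'a) list \<Rightarrow> ('v \<times> 'a) list" where
  "prj x y w = filter (\<lambda>l. fst l = x \<or> fst l = y) w"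

definition peq :: "('v \<Rightarrow> 'v \<Rightarrow> bool) \<Rightarrow> ('v \<times> 'a) list \<Rightarrow> ('v \<times> 'a) list \<Rightarrow> bool" where
  "peq E u w \<longleftrightarrow> (\<forall>x y. (x = y \<or> \<not> E x y) \<longrightarrow> prj x y u = prj x y w)"

definition adj :: "('v \<Rightarrow> 'v \<Rightarrow> bool) \<Rightarrow> 'v \<Rightarrow> ('v \<times> 'a) list \<Rightarrow> bool" where
  "adj E v p \<longleftrightarrow> (\<forall>a\<in>set p. fst a \<noteq> v \<and> E (fst a) v)"

lemma peq_refl[simp]: "peq E u u" by (simp add: peq_def)
lemma peq_sym: "peq E u w \<Longrightarrow> peq E w u" by (simp add: peq_def)
lemma peq_trans: "peq E u w \<Longrightarrow> peq E w z \<Longrightarrow> peq E u z" by (simp add: peq_def)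
lemma peq_app: "peq E u w \<Longrightarrow> peq E (a @ u @ b) (a @ w @ b)"
  by (simp add: peq_def prj_def)
lemma peq_cons: "peq E u w \<Longrightarrow> peq E (l # u) (l # w)"
  using peq_app[of E u w "[l]" "[]"] by simp
lemma prj_Cons: "prj x y (l # u) = (if fst l = x \<or> fst l = y then l # prj x y u else prj x y u)"
  by (simp add: prj_def)
lemma peq_cancel: "peq E (l # u) (l # w) \<Longrightarrow> peq E u w"
  unfolding peq_def
proof (intro allI impI)
  fix x y assume h: "\<forall>x y. (x = y \<or> \<not> E x y) \<longrightarrow> prj x y (l # u) = prj x y (l # w)" and d: "x = y \<or> \<not> E x y"
  then have "prj x y (l # u) = prj x y (l # w)" by blast
  then show "prj x y u = prj x y w" by (simp add: prj_Cons split: if_splits)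
qed

lemma peq_Nil: "peq E [] w \<Longrightarrow> w = []"
proof (cases w)
  case (Cons l w')
  assume "peq E [] w"
  then have "prj (fst l) (fst l) [] = prj (fst l) (fst l) w" by (auto simp: peq_def)
  then show ?thesis using Cons by (simp add: prj_def)
qed simp


locale gsym =
  fixes E :: "'v \<Rightarrow> 'v \<Rightarrow> bool"
  assumes symE: "\<And>u v. E u v \<Longrightarrow> E v u"
begin

lemma prj_adj_Nil:
  assumes "adj E v p" "v = x \<or> v = y" "x = y \<or> \<not> E x y"
  shows "prj x y p = []"
  using assms unfolding adj_def prj_def
  by (auto simp: filter_empty_conv dest: symE)

lemma move: "adj E (fst l) p \<Longrightarrow> peq E (p @ l # q) (l # p @ q)"
  unfolding peq_def
proof (intro allI impI)
  fix x y assume a: "adj E (fst l) p" and d: "x = y \<or> \<not> E x y"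
  show "prj x y (p @ l # q) = prj x y (l # p @ q)"
  proof (cases "fst l = x \<or> fst l = y")
    case True
    then have "prj x y p = []" using prj_adj_Nil[OF a _ d] by blast
    then show ?thesis using True by (simp add: prj_def)
  next
    case False
    then show ?thesis by (simp add: prj_def)
  qed
qed

lemma key:
  assumes "peq E (l # u) w"
  shows "\<exists>p q. w = p @ l # q \<and> adj E (fst l) p \<and> peq E u (p @ q)"
proof -
  let ?v = "fst l"
  have "prj ?v ?v (l # u) = prj ?v ?v w" using assms by (auto simp: peq_def)
  then have e1: "l # prj ?v ?v u = prj ?v ?v w" by (simp add: prj_def)
  then have "\<exists>a\<in>set w. fst a = ?v" 
  proof -
    have "filter (\<lambda>a. fst a = ?v \<or> fst a = ?v) w \<noteq> []" using e1 unfolding prj_def by (metis list.simps(3))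
    then show ?thesis unfolding filter_empty_conv by blast
  qed
  then obtain p l' q where w: "w = p @ l' # q" and fl: "fst l' = ?v" and np: "\<forall>a\<in>set p. fst a \<noteq> ?v"
    using split_list_first_prop[of w "\<lambda>a. fst a = ?v"] by blast
  have "prj ?v ?v p = []" using np by (simp add: prj_def filter_empty_conv)
  then have "l' = l" using e1 w fl by (simp add: prj_def)
  have ad: "adj E ?v p"
    unfolding adj_def
  proof
    fix a assume ain: "a \<in> set p"
    have ne: "fst a \<noteq> ?v" using np ain by blast
    show "fst a \<noteq> ?v \<and> E (fst a) ?v"
    proof (rule ccontr)
      assume "\<not> (fst a \<noteq> ?v \<and> E (fst a) ?v)"
      then have nE: "\<not> E (fst a) ?v" using ne by blast
      then have "prj (fst a) ?v (l # u) = prj (fst a) ?v w" using assms by (auto simp: peq_def)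
      moreover have "prj (fst a) ?v (l # u) = l # prj (fst a) ?v u" by (simp add: prj_def)
      moreover obtain p1 p2 where "p = p1 @ a # p2" using ain by (meson split_list)
      ultimately have "l # prj (fst a) ?v u = prj (fst a) ?v p1 @ a # prj (fst a) ?v (p2 @ l' # q)"
        using w by (simp add: prj_def)
      moreover have "\<forall>b\<in>set (prj (fst a) ?v p1). fst b \<noteq> ?v"
        using np \<open>p = p1 @ a # p2\<close> by (auto simp: prj_def)
      ultimately show False using ne
        by (cases "prj (fst a) ?v p1") auto
    qed
  qed
  have "peq E (l # u) (l # p @ q)"
    using peq_trans[OF assms[unfolded w \<open>l' = l\<close>] move[OF ad]] by simp
  then have "peq E u (p @ q)" by (rule peq_cancel)
  then show ?thesis using w \<open>l' = l\<close> ad by blast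
qed

lemma peq_set_len: "peq E u w \<Longrightarrow> set u = set w \<and> length u = length w"
proof (induction u arbitrary: w)
  case Nil then show ?case using peq_Nil by blast
next
  case (Cons l u)
  then obtain p q where "w = p @ l # q" "peq E u (p @ q)" using key by blast
  with Cons.IH[of "p @ q"] show ?case by auto
qed

end


lemma gp_words_iff: "w \<in> gp_words M \<longleftrightarrow> (\<forall>a\<in>set w. snd a \<in> carrier (M (fst a)))"
  by (auto simp: gp_words_def)

lemma split4:
  assumes "p @ x # q = P @ a # b # Q"
  shows "(\<exists>P'. P = p @ x # P' \<and> q = P' @ a # b # Q) \<or> (P = p \<and> x = a \<and> q = b # Q)
       \<or> (p = P @ [a] \<and> x = b \<and> q = Q) \<or> (\<exists>p'. p = P @ a # b # p' \<and> Q = p' @ x # q)"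
proof -
  from assms obtain us where
    "(p = P @ us \<and> us @ x # q = a # b # Q) \<or> (p @ us = P \<and> x # q = us @ a # b # Q)"
    unfolding append_eq_append_conv2 by blast
  then show ?thesis
  proof
    assume h: "p = P @ us \<and> us @ x # q = a # b # Q"
    show ?thesis
    proof (cases us)
      case Nil then show ?thesis using h by auto
    next
      case (Cons u us')
      show ?thesis
      proof (cases us')
        case Nil then show ?thesis using h Cons by auto
      next
        case (Cons u' us'') then show ?thesis using h \<open>us = u # us'\<close> by auto
      qed
    qed
  next
    assume h: "p @ us = P \<and> x # q = us @ a # b # Q"
    show ?thesis
    proof (cases us)
      case Nil then show ?thesis using h by auto
    next
      case (Cons u us') then show ?thesis using h by auto
    qed
  qed
qed

lemma gp_cons: "gp_eq E M w w' \<Longrightarrow> gp_eq E M (l # w) (l # w')"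
  using gp_ctxt[of E M w w' "[l]" "[]"] by simp

lemma gp_app2: "gp_eq E M a a' \<Longrightarrow> gp_eq E M b b' \<Longrightarrow> gp_eq E M (a @ b) (a' @ b')"
proof -
  assume 1: "gp_eq E M a a'" and 2: "gp_eq E M b b'"
  have "gp_eq E M ([] @ a @ b) ([] @ a' @ b)" using gp_ctxt[OF 1] .
  moreover have "gp_eq E M (a' @ b @ []) (a' @ b' @ [])" using gp_ctxt[OF 2] .
  ultimately show ?thesis using gp_trans by fastforce
qed

definition FF :: "('v \<Rightarrow> 'a \<Rightarrow> 'b) \<Rightarrow> ('v \<times> 'a) list \<Rightarrow> ('v \<times> 'b) list" where
  "FF f w = map (\<lambda>a. (fst a, f (fst a) (snd a))) w"

context gsym
begin

lemma move_gp:
  assumes "\<forall>a\<in>set p. E (fst a) v" "p \<in> gp_words M" "m \<in> carrier (M v)"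
  shows "gp_eq E M (p @ (v,m) # q) ((v,m) # p @ q)"
  using assms
proof (induction p)
  case Nil then show ?case by (simp add: gp_refl)
next
  case (Cons a p)
  obtain x k where a: "a = (x,k)" by fastforce
  have k: "k \<in> carrier (M x)" and pw: "p \<in> gp_words M" using Cons.prems a by (auto simp: gp_words_iff)
  have "gp_eq E M (p @ (v,m) # q) ((v,m) # p @ q)" using Cons pw by simp
  then have 1: "gp_eq E M (a # p @ (v,m) # q) (a # (v,m) # p @ q)" by (rule gp_cons)
  have "E x v" using Cons.prems a by auto
  then have "gp_eq E M [(x,k),(v,m)] [(v,m),(x,k)]" using k Cons.prems by (intro gp_comm) auto
  then have "gp_eq E M ([] @ [(x,k),(v,m)] @ (p @ q)) ([] @ [(v,m),(x,k)] @ (p @ q))" by (rule gp_ctxt)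
  then have 2: "gp_eq E M (a # (v,m) # p @ q) ((v,m) # a # p @ q)" using a by simp
  show ?case using gp_trans[OF 1 2] by simp
qed

lemma hard: "w \<in> gp_words M \<Longrightarrow> peq E w w' \<Longrightarrow> gp_eq E M w w'"
proof (induction w arbitrary: w')
  case Nil then show ?case using peq_Nil gp_refl by blast
next
  case (Cons l u)
  obtain p q where w': "w' = p @ l # q" and ad: "adj E (fst l) p" and pu: "peq E u (p @ q)"
    using key[OF Cons.prems(2)] by blast
  have sw: "set w' = set (l # u)" using peq_set_len[OF Cons.prems(2)] by simp
  have uw: "u \<in> gp_words M" using Cons.prems(1) by (simp add: gp_words_iff)
  have 1: "gp_eq E M (l # u) (l # p @ q)" using Cons.IH[OF uw pu] by (rule gp_cons)
  have pw: "p \<in> gp_words M" using Cons.prems(1) sw w' by (auto simp: gp_words_iff)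
  have lc: "snd l \<in> carrier (M (fst l))" using Cons.prems(1) by (simp add: gp_words_iff)
  have "gp_eq E M (p @ (fst l, snd l) # q) ((fst l, snd l) # p @ q)"
    using ad pw lc by (intro move_gp) (auto simp: adj_def)
  then have 2: "gp_eq E M w' (l # p @ q)" using w' by simp
  show ?case using gp_trans[OF 1 gp_sym[OF 2]] .
qed

lemma lift: "peq E (FF f r) w' \<Longrightarrow> \<exists>s. w' = FF f s \<and> peq E r s"
proof (induction r arbitrary: w')
  case Nil then have "w' = []" by (simp add: FF_def peq_Nil)
  then show ?case by (simp add: FF_def)
next
  case (Cons l r)
  have "peq E ((fst l, f (fst l) (snd l)) # FF f r) w'" using Cons.prems by (simp add: FF_def)
  then obtain p q where w': "w' = p @ (fst l, f (fst l) (snd l)) # q" and ad: "adj E (fst l) p"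
      and pq: "peq E (FF f r) (p @ q)"
    using key[of "(fst l, f (fst l) (snd l))" "FF f r" w'] by auto
  obtain s where s: "p @ q = FF f s" "peq E r s" using Cons.IH[OF pq] by blast
  then obtain s1 s2 where s12: "s = s1 @ s2" "p = FF f s1" "q = FF f s2"
    using s(1)[symmetric] unfolding FF_def map_eq_append_conv by blast
  have w2: "w' = FF f (s1 @ l # s2)" using w' s12 by (simp add: FF_def)
  have "adj E (fst l) s1" using ad s12 by (auto simp: adj_def FF_def)
  then have m: "peq E (s1 @ l # s2) (l # s1 @ s2)" by (rule move)
  have c: "peq E (l # r) (l # s1 @ s2)" using peq_cons[OF s(2)] s12 by simp
  have "peq E (l # r) (s1 @ l # s2)" using peq_trans[OF c peq_sym[OF m]] .
  then show ?case using w2 by blast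
qed

end


locale gpm = gsym E for E :: "'v \<Rightarrow> 'v \<Rightarrow> bool" +
  fixes M :: "'v \<Rightarrow> ('a, 'c) monoid_scheme"
  assumes irr: "\<And>v. \<not> E v v" and mon: "\<And>v. monoid (M v)"
begin

definition red :: "('v \<times> 'a) list \<Rightarrow> bool" where
  "red w \<longleftrightarrow> w \<in> gp_words M \<and> (\<forall>a\<in>set w. snd a \<noteq> \<one>\<^bsub>M (fst a)\<^esub>)
     \<and> (\<forall>p v m n q. \<not> peq E w (p @ (v,m) # (v,n) # q))"

definition front :: "'v \<Rightarrow> ('v \<times> 'a) list \<Rightarrow> bool" where
  "front v x \<longleftrightarrow> (\<exists>h y. peq E x ((v,h) # y))"

definition cv :: "'v \<Rightarrow> 'a \<Rightarrow> ('v \<times> 'a) list \<Rightarrow> ('v \<times> 'a) list" where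
  "cv v c y = (if c = \<one>\<^bsub>M v\<^esub> then y else (v,c) # y)"

definition act :: "'v \<times> 'a \<Rightarrow> ('v \<times> 'a) list \<Rightarrow> ('v \<times> 'a) list" where
  "act l x = (if snd l \<notin> carrier (M (fst l)) then x
     else if front (fst l) x then
       (let h = (SOME h. \<exists>y. peq E x ((fst l, h) # y));
            y = (SOME y. peq E x ((fst l, h) # y))
        in cv (fst l) (snd l \<otimes>\<^bsub>M (fst l)\<^esub> h) y)
     else cv (fst l) (snd l) x)"

lemma red_letters: "red x \<Longrightarrow> a \<in> set x \<Longrightarrow> snd a \<in> carrier (M (fst a)) \<and> snd a \<noteq> \<one>\<^bsub>M (fst a)\<^esub>"
  unfolding red_def gp_words_iff by blast

lemma red_peq: assumes "red x" "peq E x x'" shows "red x'"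
proof -
  have s: "set x' = set x" using peq_set_len[OF assms(2)] by simp
  have "\<not> peq E x' (p @ (v,m) # (v,n) # q)" for p v m n q
  proof
    assume "peq E x' (p @ (v,m) # (v,n) # q)"
    then have "peq E x (p @ (v,m) # (v,n) # q)" using peq_trans[OF assms(2)] by blast
    then show False using assms(1) unfolding red_def by blast
  qed
  then show ?thesis using assms(1) s unfolding red_def gp_words_iff by auto
qed

lemma red_Nil: "red []"
proof -
  have "\<not> peq E ([] :: ('v \<times> 'a) list) (p @ (v,m) # (v,n) # q)" for p v m n q
    using peq_Nil by fastforce
  then show ?thesis unfolding red_def gp_words_iff by simp
qed

lemma red_tail: assumes "red (l # w)" shows "red w" "\<not> front (fst l) w"
proof -
  have "\<not> peq E w (p @ (v,m) # (v,n) # q)" for p v m n q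
  proof
    assume "peq E w (p @ (v,m) # (v,n) # q)"
    then have "peq E (l # w) ((l # p) @ (v,m) # (v,n) # q)" using peq_cons by fastforce
    then show False using assms(1) unfolding red_def by blast
  qed
  then show "red w" using assms(1) unfolding red_def gp_words_iff by auto
  show "\<not> front (fst l) w"
  proof
    assume "front (fst l) w"
    then obtain h y where "peq E w ((fst l, h) # y)" unfolding front_def by blast
    then have "peq E (l # w) ([] @ (fst l, snd l) # (fst l, h) # y)" using peq_cons by fastforce
    then show False using assms(1) unfolding red_def by blast
  qed
qed

lemma red_cons:
  assumes ry: "red y" and nf: "\<not> front v y" and g: "g \<in> carrier (M v)" "g \<noteq> \<one>\<^bsub>M v\<^esub>"
  shows "red ((v,g) # y)"
proof -
  have "\<not> peq E ((v,g) # y) (P @ (a,m) # (a,n) # Q)" for P a m n Q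
  proof
    assume "peq E ((v,g) # y) (P @ (a,m) # (a,n) # Q)"
    from key[OF this] obtain p q where e: "P @ (a,m) # (a,n) # Q = p @ (v,g) # q"
      and ad: "adj E v p" and pq: "peq E y (p @ q)" by auto
    from split4[OF e[symmetric]] show False
    proof (elim disjE exE conjE)
      fix P' assume "P = p @ (v, g) # P'" "q = P' @ (a, m) # (a, n) # Q"
      then have "peq E y ((p @ P') @ (a,m) # (a,n) # Q)" using pq by simp
      then show False using ry unfolding red_def by blast
    next
      assume "P = p" "(v, g) = (a, m)" "q = (a, n) # Q"
      then have "peq E y (p @ (v,n) # Q)" using pq by simp
      moreover have "peq E (p @ (v,n) # Q) ((v,n) # p @ Q)" using ad by (intro move) simp
      ultimately have "peq E y ((v,n) # p @ Q)" by (rule peq_trans)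
      then show False using nf unfolding front_def by blast
    next
      assume "p = P @ [(a, m)]" "(v, g) = (a, n)"
      then show False using ad unfolding adj_def by auto
    next
      fix p' assume "p = P @ (a, m) # (a, n) # p'" "Q = p' @ (v, g) # q"
      then have "peq E y (P @ (a,m) # (a,n) # (p' @ q))" using pq by simp
      then show False using ry unfolding red_def by blast
    qed
  qed
  then show ?thesis using ry g unfolding red_def gp_words_iff by auto
qed

lemma uniq: assumes "peq E x ((v,h) # y)" "peq E x ((v,h') # y')" shows "h = h'" "peq E y y'"
proof -
  have e: "peq E ((v,h) # y) ((v,h') # y')" using peq_trans[OF peq_sym[OF assms(1)] assms(2)] .
  then have "prj v v ((v,h) # y) = prj v v ((v,h') # y')" unfolding peq_def by blast
  then show hh: "h = h'" by (simp add: prj_Cons)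
  show "peq E y y'" using e hh peq_cancel by blast
qed

lemma cv_resp: "peq E y y' \<Longrightarrow> peq E (cv v c y) (cv v c y')"
  unfolding cv_def by (auto intro: peq_cons)

lemma front_peq: "peq E x x' \<Longrightarrow> front v x \<longleftrightarrow> front v x'"
  unfolding front_def using peq_trans peq_sym by meson

lemma act_front:
  assumes g: "g \<in> carrier (M v)" and xh: "peq E x ((v,h) # y)"
  shows "peq E (act (v,g) x) (cv v (g \<otimes>\<^bsub>M v\<^esub> h) y)"
proof -
  have fr: "front v x" using xh unfolding front_def by blast
  define h0 where "h0 = (SOME h. \<exists>y. peq E x ((v, h) # y))"
  define y0 where "y0 = (SOME y. peq E x ((v, h0) # y))"
  have "\<exists>y. peq E x ((v, h0) # y)" unfolding h0_def using someI_ex[of "\<lambda>h. \<exists>y. peq E x ((v,h) # y)"] xh by blast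
  then have p0: "peq E x ((v, h0) # y0)" unfolding y0_def by (rule someI_ex)
  have "h0 = h" "peq E y0 y" using uniq[OF p0 xh] by auto
  moreover have "act (v,g) x = cv v (g \<otimes>\<^bsub>M v\<^esub> h0) y0"
    unfolding act_def using g fr by (simp add: h0_def y0_def Let_def)
  ultimately show ?thesis using cv_resp by simp
qed

lemma act_nofront: "g \<in> carrier (M v) \<Longrightarrow> \<not> front v x \<Longrightarrow> act (v,g) x = cv v g x"
  unfolding act_def by simp

lemma act_nc: "snd l \<notin> carrier (M (fst l)) \<Longrightarrow> act l x = x"
  unfolding act_def by simp

lemma act_resp: assumes "peq E x x'" shows "peq E (act l x) (act l x')"
proof -
  obtain v g where l: "l = (v,g)" by fastforce
  show ?thesis
  proof (cases "g \<in> carrier (M v)")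
    case False then show ?thesis using act_nc assms l by simp
  next
    case g: True
    show ?thesis
    proof (cases "front v x")
      case True
      then obtain h y where xh: "peq E x ((v,h) # y)" unfolding front_def by blast
      have x'h: "peq E x' ((v,h) # y)" using peq_trans[OF peq_sym[OF assms] xh] .
      show ?thesis using act_front[OF g xh] act_front[OF g x'h] l peq_trans peq_sym by metis
    next
      case False
      then have "\<not> front v x'" using front_peq[OF assms] by simp
      then show ?thesis using act_nofront[OF g] False l cv_resp[OF assms] by simp
    qed
  qed
qed

lemma act_cv:
  assumes c: "c \<in> carrier (M v)" and g: "g \<in> carrier (M v)" and nf: "\<not> front v y"
  shows "peq E (act (v,g) (cv v c y)) (cv v (g \<otimes>\<^bsub>M v\<^esub> c) y)"
proof (cases "c = \<one>\<^bsub>M v\<^esub>")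
  case True
  then have "cv v c y = y" by (simp add: cv_def)
  then show ?thesis using act_nofront[OF g nf] True monoid.r_one[OF mon g] by simp
next
  case False
  then have "cv v c y = (v,c) # y" by (simp add: cv_def)
  then show ?thesis using act_front[OF g, of "(v,c) # y" c y] by simp
qed

lemma red_cv: "red y \<Longrightarrow> \<not> front v y \<Longrightarrow> c \<in> carrier (M v) \<Longrightarrow> red (cv v c y)"
  unfolding cv_def using red_cons by auto

lemma decomp:
  assumes "red x"
  shows "\<exists>c y. c \<in> carrier (M v) \<and> red y \<and> \<not> front v y \<and> peq E x (cv v c y)"
proof (cases "front v x")
  case True
  then obtain h y where xh: "peq E x ((v,h) # y)" unfolding front_def by blast
  have r: "red ((v,h) # y)" using red_peq[OF assms xh] .
  have "h \<in> carrier (M v)" "h \<noteq> \<one>\<^bsub>M v\<^esub>" using red_letters[OF r, of "(v,h)"] by auto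
  moreover have "red y" "\<not> front v y" using red_tail[OF r] by auto
  moreover have "cv v h y = (v,h) # y" using calculation by (simp add: cv_def)
  ultimately show ?thesis using xh by metis
next
  case False
  then show ?thesis using assms monoid.one_closed[OF mon, of v] by (intro exI[of _ "\<one>\<^bsub>M v\<^esub>"] exI[of _ x]) (simp add: cv_def)
qed

lemma act_red: assumes "red x" shows "red (act l x)"
proof -
  obtain v g where l: "l = (v,g)" by fastforce
  show ?thesis
  proof (cases "g \<in> carrier (M v)")
    case False then show ?thesis using act_nc assms l by simp
  next
    case g: True
    obtain c y where c: "c \<in> carrier (M v)" "red y" "\<not> front v y" "peq E x (cv v c y)"
      using decomp[OF assms] by blast
    have "peq E (act (v,g) x) (cv v (g \<otimes>\<^bsub>M v\<^esub> c) y)"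
      using peq_trans[OF act_resp[OF c(4)] act_cv[OF c(1) g c(3)]] .
    moreover have "red (cv v (g \<otimes>\<^bsub>M v\<^esub> c) y)" using red_cv c g monoid.m_closed[OF mon] by blast
    ultimately show ?thesis using red_peq peq_sym l by metis
  qed
qed

end


context gpm
begin

lemma front_cv:
  assumes "E u v" "front u (cv v c z)" shows "front u z"
proof (cases "c = \<one>\<^bsub>M v\<^esub>")
  case True then show ?thesis using assms by (simp add: cv_def)
next
  case False
  have uv: "u \<noteq> v" using assms(1) irr by blast
  from assms(2) False obtain h y where "peq E ((v,c) # z) ((u,h) # y)"
    unfolding front_def cv_def by auto
  then have "peq E ((u,h) # y) ((v,c) # z)" by (rule peq_sym)
  from key[OF this] obtain p q where e: "(v,c) # z = p @ (u,h) # q" and ad: "adj E u p"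
    by auto
  obtain p' where p: "p = (v,c) # p'" "z = p' @ (u,h) # q"
    using e uv by (cases p) auto
  have "adj E u p'" using ad p by (simp add: adj_def)
  then have "peq E (p' @ (u,h) # q) ((u,h) # p' @ q)" by (intro move) simp
  then show ?thesis using p unfolding front_def by blast
qed

lemma cv_swap:
  assumes "E u v"
  shows "peq E (cv v c (cv u d z)) (cv u d (cv v c z))"
proof -
  have uv: "u \<noteq> v" using assms irr by blast
  have "adj E u [(v,c)]" using uv symE[OF assms] by (simp add: adj_def)
  then have "peq E ([(v,c)] @ (u,d) # z) ((u,d) # [(v,c)] @ z)" by (intro move) simp
  then show ?thesis by (simp add: cv_def)
qed

lemma R1: assumes "red x" shows "peq E (act (v, \<one>\<^bsub>M v\<^esub>) x) x"
proof -
  obtain c y where c: "c \<in> carrier (M v)" "red y" "\<not> front v y" "peq E x (cv v c y)"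
    using decomp[OF assms] by blast
  have o: "\<one>\<^bsub>M v\<^esub> \<in> carrier (M v)" using monoid.one_closed[OF mon] .
  have "peq E (act (v, \<one>\<^bsub>M v\<^esub>) x) (cv v (\<one>\<^bsub>M v\<^esub> \<otimes>\<^bsub>M v\<^esub> c) y)"
    using peq_trans[OF act_resp[OF c(4)] act_cv[OF c(1) o c(3)]] .
  then show ?thesis using monoid.l_one[OF mon c(1)] peq_trans peq_sym c(4) by metis
qed

lemma R2:
  assumes "red x" "m \<in> carrier (M v)" "n \<in> carrier (M v)"
  shows "peq E (act (v,m) (act (v,n) x)) (act (v, m \<otimes>\<^bsub>M v\<^esub> n) x)"
proof -
  obtain c y where c: "c \<in> carrier (M v)" "red y" "\<not> front v y" "peq E x (cv v c y)"
    using decomp[OF assms(1)] by blast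
  have 1: "peq E (act (v,n) x) (cv v (n \<otimes>\<^bsub>M v\<^esub> c) y)"
    using peq_trans[OF act_resp[OF c(4)] act_cv[OF c(1) assms(3) c(3)]] .
  have nc: "n \<otimes>\<^bsub>M v\<^esub> c \<in> carrier (M v)" using monoid.m_closed[OF mon assms(3) c(1)] .
  have 2: "peq E (act (v,m) (act (v,n) x)) (cv v (m \<otimes>\<^bsub>M v\<^esub> (n \<otimes>\<^bsub>M v\<^esub> c)) y)"
    using peq_trans[OF act_resp[OF 1] act_cv[OF nc assms(2) c(3)]] .
  have mn: "m \<otimes>\<^bsub>M v\<^esub> n \<in> carrier (M v)" using monoid.m_closed[OF mon assms(2) assms(3)] .
  have 3: "peq E (act (v, m \<otimes>\<^bsub>M v\<^esub> n) x) (cv v ((m \<otimes>\<^bsub>M v\<^esub> n) \<otimes>\<^bsub>M v\<^esub> c) y)"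
    using peq_trans[OF act_resp[OF c(4)] act_cv[OF c(1) mn c(3)]] .
  have "(m \<otimes>\<^bsub>M v\<^esub> n) \<otimes>\<^bsub>M v\<^esub> c = m \<otimes>\<^bsub>M v\<^esub> (n \<otimes>\<^bsub>M v\<^esub> c)"
    using monoid.m_assoc[OF mon assms(2) assms(3) c(1)] .
  then show ?thesis using 2 3 peq_trans peq_sym by metis
qed

lemma R3:
  assumes "red x" "E u v" "m \<in> carrier (M u)" "n \<in> carrier (M v)"
  shows "peq E (act (u,m) (act (v,n) x)) (act (v,n) (act (u,m) x))"
proof -
  have vu: "E v u" using symE[OF assms(2)] .
  obtain c y where c: "c \<in> carrier (M v)" "red y" "\<not> front v y" "peq E x (cv v c y)"
    using decomp[OF assms(1)] by blast
  obtain d z where d: "d \<in> carrier (M u)" "red z" "\<not> front u z" "peq E y (cv u d z)"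
    using decomp[OF c(2)] by blast
  have nfvz: "\<not> front v z"
  proof
    assume "front v z"
    then obtain k w where "peq E z ((v,k) # w)" unfolding front_def by blast
    then have "peq E (cv u d z) (cv u d ((v,k) # w))" by (rule cv_resp)
    moreover have "peq E (cv u d ((v,k) # w)) ((v,k) # cv u d w)"
    proof (cases "d = \<one>\<^bsub>M u\<^esub>")
      case True then show ?thesis by (simp add: cv_def)
    next
      case False
      have "u \<noteq> v" using assms(2) irr by blast
      then have "adj E v [(u,d)]" using assms(2) by (simp add: adj_def)
      then have "peq E ([(u,d)] @ (v,k) # w) ((v,k) # [(u,d)] @ w)" by (intro move) simp
      then show ?thesis using False by (simp add: cv_def)
    qed
    ultimately have "front v y" using d(4) unfolding front_def using peq_trans by metis
    then show False using c(3) by blast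
  qed
  have nfv: "\<not> front v (cv u e z)" for e using front_cv[OF vu] nfvz by blast
  have nfu: "\<not> front u (cv v e z)" for e using front_cv[OF assms(2)] d(3) by blast
  have X: "peq E x (cv v c (cv u d z))" using peq_trans[OF c(4) cv_resp[OF d(4)]] .
  have nc: "n \<otimes>\<^bsub>M v\<^esub> c \<in> carrier (M v)" using monoid.m_closed[OF mon assms(4) c(1)] .
  have md: "m \<otimes>\<^bsub>M u\<^esub> d \<in> carrier (M u)" using monoid.m_closed[OF mon assms(3) d(1)] .
  have L1: "peq E (act (v,n) x) (cv v (n \<otimes>\<^bsub>M v\<^esub> c) (cv u d z))"
    using peq_trans[OF act_resp[OF X] act_cv[OF c(1) assms(4) nfv]] .
  have L2: "peq E (act (u,m) (act (v,n) x)) (act (u,m) (cv u d (cv v (n \<otimes>\<^bsub>M v\<^esub> c) z)))"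
    using peq_trans[OF act_resp[OF L1] act_resp[OF cv_swap[OF assms(2)]]] .
  have L3: "peq E (act (u,m) (act (v,n) x)) (cv u (m \<otimes>\<^bsub>M u\<^esub> d) (cv v (n \<otimes>\<^bsub>M v\<^esub> c) z))"
    using peq_trans[OF L2 act_cv[OF d(1) assms(3) nfu]] .
  have X': "peq E x (cv u d (cv v c z))" using peq_trans[OF X cv_swap[OF assms(2)]] .
  have M1: "peq E (act (u,m) x) (cv u (m \<otimes>\<^bsub>M u\<^esub> d) (cv v c z))"
    using peq_trans[OF act_resp[OF X'] act_cv[OF d(1) assms(3) nfu]] .
  have M2: "peq E (act (u,m) x) (cv v c (cv u (m \<otimes>\<^bsub>M u\<^esub> d) z))"
    using peq_trans[OF M1 peq_sym[OF cv_swap[OF assms(2)]]] .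
  have M3: "peq E (act (v,n) (act (u,m) x)) (cv v (n \<otimes>\<^bsub>M v\<^esub> c) (cv u (m \<otimes>\<^bsub>M u\<^esub> d) z))"
    using peq_trans[OF act_resp[OF M2] act_cv[OF c(1) assms(4) nfv]] .
  have M4: "peq E (act (v,n) (act (u,m) x)) (cv u (m \<otimes>\<^bsub>M u\<^esub> d) (cv v (n \<otimes>\<^bsub>M v\<^esub> c) z))"
    using peq_trans[OF M3 cv_swap[OF assms(2)]] .
  show ?thesis using peq_trans[OF L3 peq_sym[OF M4]] .
qed

definition Act :: "('v \<times> 'a) list \<Rightarrow> ('v \<times> 'a) list \<Rightarrow> ('v \<times> 'a) list" where
  "Act w x = foldr act w x"

lemma Act_simps[simp]: "Act [] x = x" "Act (l # w) x = act l (Act w x)" "Act (a @ b) x = Act a (Act b x)"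
  by (simp_all add: Act_def)

lemma Act_red: "red x \<Longrightarrow> red (Act w x)"
  by (induction w) (auto intro: act_red)

lemma Act_resp: "peq E x x' \<Longrightarrow> peq E (Act w x) (Act w x')"
  by (induction w) (auto intro: act_resp)

lemma gp_Act: "gp_eq E M w w' \<Longrightarrow> red x \<Longrightarrow> peq E (Act w x) (Act w' x)"
proof (induction arbitrary: x rule: gp_eq.induct)
  case (gp_refl w) then show ?case by simp
next
  case (gp_sym w w') then show ?case using peq_sym by blast
next
  case (gp_trans w w' w'') then show ?case using peq_trans by blast
next
  case (gp_ctxt w w' a b)
  have "red (Act b x)" using Act_red gp_ctxt.prems by blast
  then have "peq E (Act w (Act b x)) (Act w' (Act b x))" using gp_ctxt.IH by blast
  then show ?case by (simp add: Act_resp)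
next
  case (gp_unit v) then show ?case using R1 by simp
next
  case (gp_mult m v n) then show ?case using R2 by simp
next
  case (gp_comm u v m n) then show ?case using R3 by simp
qed

lemma Act_self: "red w \<Longrightarrow> peq E (Act w []) w"
proof (induction w)
  case Nil then show ?case by simp
next
  case (Cons l w)
  obtain v g where l: "l = (v,g)" by fastforce
  have rw: "red w" and nf: "\<not> front v w" using red_tail[OF Cons.prems] l by auto
  have g: "g \<in> carrier (M v)" "g \<noteq> \<one>\<^bsub>M v\<^esub>" using red_letters[OF Cons.prems, of l] l by auto
  have 1: "peq E (act l (Act w [])) (act l w)" using act_resp[OF Cons.IH[OF rw]] .
  have "act l w = (v,g) # w" using act_nofront[OF g(1) nf] g l by (simp add: cv_def)
  then show ?case using 1 l by simp
qed

lemma NF: "red w \<Longrightarrow> red w' \<Longrightarrow> gp_eq E M w w' \<Longrightarrow> peq E w w'"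
  using gp_Act[of w w' "[]"] red_Nil Act_self peq_trans peq_sym by metis

lemma reduce: "w \<in> gp_words M \<Longrightarrow> \<exists>r. red r \<and> gp_eq E M w r"
proof (induction "length w" arbitrary: w rule: less_induct)
  case less
  show ?case
  proof (cases "red w")
    case True then show ?thesis using gp_refl by blast
  next
    case False
    show ?thesis
    proof (cases "\<exists>a\<in>set w. snd a = \<one>\<^bsub>M (fst a)\<^esub>")
      case True
      then obtain p a q where w: "w = p @ a # q" and a: "snd a = \<one>\<^bsub>M (fst a)\<^esub>"
        by (meson split_list)
      have "gp_eq E M [(fst a, \<one>\<^bsub>M (fst a)\<^esub>)] []" by (rule gp_unit)
      then have "gp_eq E M (p @ [(fst a, \<one>\<^bsub>M (fst a)\<^esub>)] @ q) (p @ [] @ q)" by (rule gp_ctxt)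
      then have 1: "gp_eq E M w (p @ q)" using w a by (cases a) simp
      have "p @ q \<in> gp_words M" "length (p @ q) < length w" using less.prems w by (auto simp: gp_words_iff)
      then obtain r where "red r" "gp_eq E M (p @ q) r" using less.hyps by blast
      then show ?thesis using gp_trans[OF 1] by blast
    next
      case nu: False
      then obtain p v m n q where pe: "peq E w (p @ (v,m) # (v,n) # q)"
        using False less.prems unfolding red_def by blast
      have sl: "set (p @ (v,m) # (v,n) # q) = set w" "length (p @ (v,m) # (v,n) # q) = length w"
        using peq_set_len[OF pe] by auto
      have "(v,m) \<in> set w" "(v,n) \<in> set w" using sl(1) by auto
      then have mn: "m \<in> carrier (M v)" "n \<in> carrier (M v)" using less.prems by (fastforce simp: gp_words_iff)+
      have 1: "gp_eq E M w (p @ (v,m) # (v,n) # q)" using hard[OF less.prems pe] .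
      have "gp_eq E M (p @ [(v,m),(v,n)] @ q) (p @ [(v, m \<otimes>\<^bsub>M v\<^esub> n)] @ q)"
        using gp_mult[of m M v n E, OF mn] by (rule gp_ctxt)
      then have 2: "gp_eq E M w (p @ (v, m \<otimes>\<^bsub>M v\<^esub> n) # q)" using gp_trans[OF 1] by simp
      have "p @ (v, m \<otimes>\<^bsub>M v\<^esub> n) # q \<in> gp_words M"
        using sl(1) less.prems monoid.m_closed[OF mon mn] by (auto simp: gp_words_iff)
      moreover have "length (p @ (v, m \<otimes>\<^bsub>M v\<^esub> n) # q) < length w" using sl(2) by simp
      ultimately obtain r where "red r" "gp_eq E M (p @ (v, m \<otimes>\<^bsub>M v\<^esub> n) # q) r" using less.hyps by blast
      then show ?thesis using gp_trans[OF 2] by blast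
    qed
  qed
qed

end


lemma gp_class_eq: "gp_eq E M w w' \<Longrightarrow> gp_class E M w = gp_class E M w'"
  unfolding gp_class_def using gp_trans gp_sym by blast

lemma some_rep:
  assumes "w \<in> gp_words M"
  shows "(SOME x. x \<in> gp_class E M w \<inter> gp_words M) \<in> gp_words M \<and>
         gp_eq E M w (SOME x. x \<in> gp_class E M w \<inter> gp_words M)"
proof -
  have "w \<in> gp_class E M w \<inter> gp_words M" using assms gp_refl by (simp add: gp_class_def)
  then have "(SOME x. x \<in> gp_class E M w \<inter> gp_words M) \<in> gp_class E M w \<inter> gp_words M"
    by (rule someI)
  then show ?thesis by (simp add: gp_class_def)
qed

lemma FF_app[simp]: "FF f (a @ b) = FF f a @ FF f b" and FF_Cons[simp]: "FF f (l # w) = (fst l, f (fst l) (snd l)) # FF f w"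
  and FF_Nil[simp]: "FF f [] = []"
  by (simp_all add: FF_def)

locale emb =
  fixes E :: "'v \<Rightarrow> 'v \<Rightarrow> bool" and M :: "'v \<Rightarrow> 'a monoid" and G :: "'v \<Rightarrow> 'b monoid"
    and f :: "'v \<Rightarrow> 'a \<Rightarrow> 'b"
  assumes symE: "\<And>u v. E u v \<Longrightarrow> E v u" and irr: "\<And>v. \<not> E v v"
    and monM: "\<And>v. monoid (M v)" and monG: "\<And>v. monoid (G v)"
    and fe: "\<And>v. monoid_embedding (M v) (G v) (f v)"
begin

sublocale MM: gpm E M by (intro gpm.intro gsym.intro gpm_axioms.intro) (auto intro: symE monM simp: irr)
sublocale GG: gpm E G by (intro gpm.intro gsym.intro gpm_axioms.intro) (auto intro: symE monG simp: irr)

lemma f_hom: "f v \<in> hom (M v) (G v)" and f_inj: "inj_on (f v) (carrier (M v))"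
  and f_one: "f v \<one>\<^bsub>M v\<^esub> = \<one>\<^bsub>G v\<^esub>"
  using fe[of v] by (auto simp: monoid_embedding_def mon_def)

lemma f_closed: "m \<in> carrier (M v) \<Longrightarrow> f v m \<in> carrier (G v)"
  using f_hom by (auto simp: hom_def)

lemma f_mult: "m \<in> carrier (M v) \<Longrightarrow> n \<in> carrier (M v) \<Longrightarrow>
    f v (m \<otimes>\<^bsub>M v\<^esub> n) = f v m \<otimes>\<^bsub>G v\<^esub> f v n"
  using f_hom by (auto simp: hom_def)

lemma FF_gp: "gp_eq E M w w' \<Longrightarrow> gp_eq E G (FF f w) (FF f w')"
proof (induction rule: gp_eq.induct)
  case (gp_refl w) then show ?case by (rule gp_eq.gp_refl)
next
  case (gp_sym w w') show ?case using gp_sym.IH by (rule gp_eq.gp_sym)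
next
  case (gp_trans w w' w'') show ?case by (rule gp_eq.gp_trans[OF gp_trans.IH])
next
  case (gp_ctxt w w' a b) show ?case using gp_eq.gp_ctxt[OF gp_ctxt.IH] by simp
next
  case (gp_unit v) then show ?case by (simp add: f_one gp_eq.gp_unit)
next
  case (gp_mult m v n) then show ?case by (simp add: f_mult f_closed gp_eq.gp_mult)
next
  case (gp_comm u v m n) then show ?case by (simp add: f_closed gp_eq.gp_comm)
qed

lemma FF_words: "w \<in> gp_words M \<Longrightarrow> FF f w \<in> gp_words G"
  by (auto simp: gp_words_iff FF_def f_closed)

lemma FF_inj: "r \<in> gp_words M \<Longrightarrow> s \<in> gp_words M \<Longrightarrow> FF f r = FF f s \<Longrightarrow> r = s"
proof (induction r arbitrary: s)
  case Nil then show ?case by (simp add: FF_def)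
next
  case (Cons l r)
  then obtain l' s' where s: "s = l' # s'" by (cases s) auto
  have e: "fst l = fst l'" "f (fst l) (snd l) = f (fst l) (snd l')" "FF f r = FF f s'"
    using Cons.prems(3) s by auto
  have c: "snd l \<in> carrier (M (fst l))" "snd l' \<in> carrier (M (fst l))"
    using Cons.prems(1,2) s e(1) by (auto simp: gp_words_iff)
  have "snd l = snd l'" using f_inj[of "fst l"] e(2) c by (auto simp: inj_on_def)
  then have "l = l'" using e(1) by (simp add: prod_eq_iff)
  moreover have "r = s'" using Cons.IH[OF _ _ e(3)] Cons.prems(1,2) s by (simp add: gp_words_iff)
  ultimately show ?case using s by simp
qed

lemma peq_FF: "r \<in> gp_words M \<Longrightarrow> r' \<in> gp_words M \<Longrightarrow> peq E (FF f r) (FF f r') \<Longrightarrow> peq E r r'"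
proof -
  assume r: "r \<in> gp_words M" and r': "r' \<in> gp_words M" and p: "peq E (FF f r) (FF f r')"
  obtain s where s: "FF f r' = FF f s" "peq E r s" using MM.lift[OF p] by blast
  have "set s = set r" using MM.peq_set_len[OF s(2)] by simp
  then have "s \<in> gp_words M" using r by (simp add: gp_words_iff)
  then have "r' = s" using FF_inj[OF r' _ s(1)] by simp
  then show ?thesis using s(2) by simp
qed

lemma FF_red: assumes "MM.red r" shows "GG.red (FF f r)"
proof -
  have rw: "r \<in> gp_words M" using assms unfolding MM.red_def by blast
  have nu: "\<forall>a\<in>set (FF f r). snd a \<noteq> \<one>\<^bsub>G (fst a)\<^esub>"
  proof
    fix a assume "a \<in> set (FF f r)"
    then obtain b where b: "b \<in> set r" "a = (fst b, f (fst b) (snd b))" by (auto simp: FF_def)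
    have bc: "snd b \<in> carrier (M (fst b))" "snd b \<noteq> \<one>\<^bsub>M (fst b)\<^esub>" using MM.red_letters[OF assms b(1)] by auto
    have "f (fst b) (snd b) \<noteq> f (fst b) \<one>\<^bsub>M (fst b)\<^esub>"
      using f_inj[of "fst b"] bc monoid.one_closed[OF monM] by (auto simp: inj_on_def)
    then show "snd a \<noteq> \<one>\<^bsub>G (fst a)\<^esub>" using b(2) f_one by simp
  qed
  have na: "\<not> peq E (FF f r) (p @ (v,m) # (v,n) # q)" for p v m n q
  proof
    assume "peq E (FF f r) (p @ (v,m) # (v,n) # q)"
    from MM.lift[OF this] obtain s where s: "p @ (v,m) # (v,n) # q = FF f s" "peq E r s" by blast
    from s(1)[symmetric] obtain s1 l1 l2 s2 where "s = s1 @ l1 # l2 # s2" "fst l1 = v" "fst l2 = v"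
      unfolding FF_def map_eq_append_conv map_eq_Cons_conv by force
    moreover have "l1 = (v, snd l1)" "l2 = (v, snd l2)" using calculation by (simp_all add: prod_eq_iff)
    ultimately have "peq E r (s1 @ (v, snd l1) # (v, snd l2) # s2)" using s(2) by metis
    then show False using assms unfolding MM.red_def by blast
  qed
  show ?thesis unfolding GG.red_def using FF_words[OF rw] nu na by blast
qed

definition Phi where "Phi X = gp_class E G (FF f (SOME x. x \<in> X \<inter> gp_words M))"

lemma Phi_cls: "w \<in> gp_words M \<Longrightarrow> Phi (gp_class E M w) = gp_class E G (FF f w)"
  unfolding Phi_def using some_rep[of w M E] FF_gp gp_class_eq gp_eq.gp_sym by metis

lemma main: "monoid_embedding (graph_product E M) (graph_product E G) Phi"
proof -
  have car: "Phi \<in> carrier (graph_product E M) \<rightarrow> carrier (graph_product E G)"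
    using Phi_cls FF_words by (auto simp: graph_product_def)
  have mul: "Phi (X \<otimes>\<^bsub>graph_product E M\<^esub> Y) = Phi X \<otimes>\<^bsub>graph_product E G\<^esub> Phi Y"
    if X: "X \<in> carrier (graph_product E M)" and Y: "Y \<in> carrier (graph_product E M)" for X Y
  proof -
    obtain w w' where ww: "w \<in> gp_words M" "X = gp_class E M w" "w' \<in> gp_words M" "Y = gp_class E M w'"
      using X Y by (auto simp: graph_product_def)
    define x where "x = (SOME x. x \<in> X \<inter> gp_words M)"
    define y where "y = (SOME y. y \<in> Y \<inter> gp_words M)"
    have x: "x \<in> gp_words M" "gp_eq E M w x" using some_rep[OF ww(1), of E] ww(2) x_def by auto
    have y: "y \<in> gp_words M" "gp_eq E M w' y" using some_rep[OF ww(3), of E] ww(4) y_def by auto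
    have xy: "x @ y \<in> gp_words M" using x y by (auto simp: gp_words_iff)
    have L: "Phi (X \<otimes>\<^bsub>graph_product E M\<^esub> Y) = gp_class E G (FF f (x @ y))"
      using Phi_cls[OF xy] by (simp add: graph_product_def x_def y_def)
    define x' where "x' = (SOME x. x \<in> gp_class E G (FF f w) \<inter> gp_words G)"
    define y' where "y' = (SOME y. y \<in> gp_class E G (FF f w') \<inter> gp_words G)"
    have x': "gp_eq E G (FF f w) x'" using some_rep[OF FF_words[OF ww(1)], of E] x'_def by auto
    have y': "gp_eq E G (FF f w') y'" using some_rep[OF FF_words[OF ww(3)], of E] y'_def by auto
    have R: "Phi X \<otimes>\<^bsub>graph_product E G\<^esub> Phi Y = gp_class E G (x' @ y')"
      using Phi_cls[OF ww(1)] Phi_cls[OF ww(3)] ww(2,4) by (simp add: graph_product_def x'_def y'_def)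
    have "gp_eq E G (FF f x) x'" using gp_trans[OF gp_sym[OF FF_gp[OF x(2)]] x'] .
    moreover have "gp_eq E G (FF f y) y'" using gp_trans[OF gp_sym[OF FF_gp[OF y(2)]] y'] .
    ultimately have "gp_eq E G (FF f (x @ y)) (x' @ y')" using gp_app2 by simp
    then show ?thesis using L R gp_class_eq by simp
  qed
  have inj: "inj_on Phi (carrier (graph_product E M))"
  proof (rule inj_onI)
    fix X Y assume X: "X \<in> carrier (graph_product E M)" and Y: "Y \<in> carrier (graph_product E M)"
      and e: "Phi X = Phi Y"
    obtain w w' where ww: "w \<in> gp_words M" "X = gp_class E M w" "w' \<in> gp_words M" "Y = gp_class E M w'"
      using X Y by (auto simp: graph_product_def)
    have "gp_class E G (FF f w) = gp_class E G (FF f w')" using e ww Phi_cls by simp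
    then have g: "gp_eq E G (FF f w) (FF f w')"
      using gp_eq.gp_refl[of E G "FF f w'"] by (auto simp: gp_class_def)
    obtain r where r: "MM.red r" "gp_eq E M w r" using MM.reduce[OF ww(1)] by blast
    obtain r' where r': "MM.red r'" "gp_eq E M w' r'" using MM.reduce[OF ww(3)] by blast
    have "gp_eq E G (FF f r) (FF f r')"
      using gp_trans[OF gp_trans[OF gp_sym[OF FF_gp[OF r(2)]] g] FF_gp[OF r'(2)]] .
    then have "peq E (FF f r) (FF f r')" using GG.NF FF_red r(1) r'(1) by blast
    moreover have rw: "r \<in> gp_words M" "r' \<in> gp_words M" using r(1) r'(1) unfolding MM.red_def by auto
    ultimately have "peq E r r'" using peq_FF by blast
    then have "gp_eq E M r r'" using MM.hard rw by blast
    then have "gp_eq E M w w'" using gp_trans[OF gp_trans[OF r(2)] gp_sym[OF r'(2)]] by blast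
    then show "X = Y" using ww gp_class_eq by simp
  qed
  have one: "Phi \<one>\<^bsub>graph_product E M\<^esub> = \<one>\<^bsub>graph_product E G\<^esub>"
    using Phi_cls[of "[]"] by (simp add: graph_product_def gp_words_def)
  show ?thesis unfolding monoid_embedding_def mon_def hom_def using car mul inj one by blast
qed

end

theorem corollary1p8:
  fixes E :: "'v \<Rightarrow> 'v \<Rightarrow> bool"
    and M :: "'v \<Rightarrow> 'a monoid"
    and G :: "'v \<Rightarrow> 'b monoid"
  assumes "\<And>u v. E u v \<Longrightarrow> E v u"
    and "\<And>v. \<not> E v v"
    and "\<And>v. monoid (M v)"
    and "\<And>v. group (G v)"
    and "\<And>v. embeddable (M v) (G v)"
  shows "embeddable (graph_product E M) (graph_product E G)"
proof -
  define f where "f v = (SOME f. monoid_embedding (M v) (G v) f)" for v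
  have fe: "monoid_embedding (M v) (G v) (f v)" for v
    using assms(5)[of v] unfolding embeddable_def f_def by (metis someI_ex)
  interpret emb E M G f
    by (rule emb.intro[OF assms(1) assms(2) assms(3) group.is_monoid[OF assms(4)] fe])
  show ?thesis unfolding embeddable_def using main by blast
qed


end
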